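(* Let $$U_8=S_0\otimes S_0\otimes S_0+S_1\otimes S_3\otimes S_0+S_2\otimes S_0\otimes S_1+S_3\otimes S_2\otimes S_1+S_0\otimes S_1\otimes S_2+S_1\otimes S_2\otimes S_2+S_2\otimes S_1\otimes S_3+S_3\otimes S_3\otimes S_3.$$ Then $\mathrm{sr}(U_8)\in\{7,8\}$.
   Context: $S_0=\begin{bmatrix}1&0\\0&0\end{bmatrix}$, $S_1=\begin{bmatrix}0&1\\0&0\end{bmatrix}$, $S_2=\begin{bmatrix}0&0\\1&0\end{bmatrix}$, $S_3=\begin{bmatrix}0&0\\0&1\end{bmatrix}$. For a matrix $U$ on $\mathbb{C}^2\otimes\mathbb{C}^2\otimes\mathbb{C}^2$ (systems $A,B,C$), its Schmidt rank $\mathrm{sr}(U)$ is the least integer $r$ such that $U=\sum_{j=1}^r A_j\otimes B_j\otimes C_j$ with $A_j,B_j,C_j$ complex $2\times 2$ matrices (i.e. the tensor rank of $U$). *)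

theory Defs
  imports "HOL-Analysis.Analysis"
begin

type_synonym mat2 = "complex^2^2"

definition mat2_of :: "complex \<Rightarrow> complex \<Rightarrow> complex \<Rightarrow> complex \<Rightarrow> mat2" where
  "mat2_of a b c d = (\<chi> i j. if i = 1 then (if j = 1 then a else b) else (if j = 1 then c else d))"

definition S0 :: mat2 where "S0 = mat2_of 1 0 0 0"
definition S1 :: mat2 where "S1 = mat2_of 0 1 0 0"
definition S2 :: mat2 where "S2 = mat2_of 0 0 1 0"
definition S3 :: mat2 where "S3 = mat2_of 0 0 0 1"

text \<open>Operators on C^2 (x) C^2 (x) C^2, as 8x8 matrices whose rows/columns are
  indexed by triples of basis indices (A,B,C).\<close>
type_synonym op3 = "(2 \<times> 2 \<times> 2) \<Rightarrow> (2 \<times> 2 \<times> 2) \<Rightarrow> complex"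

definition tprod3 :: "mat2 \<Rightarrow> mat2 \<Rightarrow> mat2 \<Rightarrow> op3" where
  "tprod3 A B C = (\<lambda>(i1, i2, i3) (j1, j2, j3). A $ i1 $ j1 * B $ i2 $ j2 * C $ i3 $ j3)"

text \<open>Schmidt rank = tensor rank: least r with U a sum of r elementary tensors.\<close>
definition schmidt_rank :: "op3 \<Rightarrow> nat" where
  "schmidt_rank U = (LEAST r. \<exists>A B C :: nat \<Rightarrow> mat2.
      U = (\<lambda>x y. \<Sum>j<r. tprod3 (A j) (B j) (C j) x y))"

definition U8 :: op3 where
  "U8 = (\<lambda>x y. tprod3 S0 S0 S0 x y + tprod3 S1 S3 S0 x y + tprod3 S2 S0 S1 x y
             + tprod3 S3 S2 S1 x y + tprod3 S0 S1 S2 x y + tprod3 S1 S2 S2 x y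
             + tprod3 S2 S1 S3 x y + tprod3 S3 S3 S3 x y)"

end

theory Submission
  imports Defs
begin


definition outer :: "complex^2 \<Rightarrow> complex^2 \<Rightarrow> mat2" where
  "outer u v = (\<chi> i j. u$i * v$j)"
definition lin :: "complex \<Rightarrow> complex \<Rightarrow> mat2 \<Rightarrow> mat2 \<Rightarrow> mat2" where
  "lin a b M N = (\<chi> i j. a * M$i$j + b * N$i$j)"
definition phi :: "mat2 \<Rightarrow> mat2" where
  "phi X = (\<chi> i j. if i = 1 then (if j = 1 then X$1$2 else X$1$1) else X$i$j)"
definition det2 :: "mat2 \<Rightarrow> complex" where
  "det2 M = M$1$1 * M$2$2 - M$1$2 * M$2$1"
definition pr :: "mat2 \<Rightarrow> mat2 \<Rightarrow> complex" where
  "pr T X = T$1$1 * X$1$1 + T$1$2 * X$1$2 + T$2$1 * X$2$1 + T$2$2 * X$2$2"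
definition sm :: "complex \<Rightarrow> mat2 \<Rightarrow> mat2" where
  "sm c M = (\<chi> i j. c * M$i$j)"

lemma mat_eq: "(M::mat2) = N \<longleftrightarrow> M$1$1 = N$1$1 \<and> M$1$2 = N$1$2 \<and> M$2$1 = N$2$1 \<and> M$2$2 = N$2$2"
  by (auto simp: vec_eq_iff forall_2)
lemma v_eq: "(u::complex^2) = v \<longleftrightarrow> u$1 = v$1 \<and> u$2 = v$2"
  by (auto simp: vec_eq_iff forall_2)

lemma outer_nth[simp]: "outer u v $ i $ j = u$i * v$j" by (simp add: outer_def)
lemma lin_nth[simp]: "lin a b M N $ i $ j = a * M$i$j + b * N$i$j" by (simp add: lin_def)
lemma sm_nth[simp]: "sm c M $ i $ j = c * M$i$j" by (simp add: sm_def)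
lemma phi_nth[simp]: "phi X $ 1 $ 1 = X$1$2" "phi X $ 1 $ 2 = X$1$1"
  "phi X $ 2 $ j = X$2$j" by (simp_all add: phi_def)

lemma phi_phi[simp]: "phi (phi X) = X" by (simp add: mat_eq)
lemma phi_sm: "phi (sm c X) = sm c (phi X)" by (simp add: mat_eq)
lemma phi_add: "phi (X + Y) = phi X + phi Y" by (simp add: mat_eq)
lemma phi_zero[simp]: "phi 0 = 0" by (simp add: mat_eq)
lemma phi_eq0: "phi X = 0 \<longleftrightarrow> X = 0" by (auto simp: mat_eq)

lemma outer_zero: "outer p t = 0 \<longleftrightarrow> p = 0 \<or> t = 0"
  by (auto simp: mat_eq v_eq)

lemma lin_scale: "lin (m*z1) (m*z2) M N = sm m (lin z1 z2 M N)"
  by (simp add: mat_eq algebra_simps)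

lemma det2_outer[simp]: "det2 (outer p t) = 0" by (simp add: det2_def)

definition valid :: "mat2 \<Rightarrow> mat2 \<Rightarrow> mat2 \<Rightarrow> mat2 \<Rightarrow> mat2 \<Rightarrow> mat2 \<Rightarrow> complex^2 \<Rightarrow> complex^2 \<Rightarrow> complex^2 \<Rightarrow> complex^2 \<Rightarrow> complex \<Rightarrow> complex \<Rightarrow> bool" where
  "valid H1 H2 K1 K2 G1 G2 p q s t a b \<longleftrightarrow> outer p t = lin a b H1 H2 \<and> outer q s = lin a b K1 K2
     \<and> outer q t = phi (outer p s) + lin a b G1 G2"

lemma V1:
  assumes "valid H1 H2 K1 K2 G1 G2 p q s t a b" "lin a b H1 H2 = 0"
  shows "\<exists>c. outer p s = sm c (phi (lin a b G1 G2))"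
proof -
  from assms have "p = 0 \<or> t = 0" by (auto simp: valid_def outer_zero)
  then show ?thesis
  proof
    assume "p = 0" then show ?thesis by (intro exI[of _ 0]) (simp add: mat_eq)
  next
    assume "t = 0"
    then have "outer q t = 0" by (simp add: outer_zero)
    with assms have "phi (outer p s) = - lin a b G1 G2" by (simp add: valid_def eq_neg_iff_add_eq_0)
    then have "outer p s = phi (- lin a b G1 G2)" by (metis phi_phi)
    then show ?thesis by (intro exI[of _ "-1"]) (simp add: mat_eq)
  qed
qed

lemma V2:
  assumes "valid H1 H2 K1 K2 G1 G2 p q s t a b" "lin a b K1 K2 = 0"
  shows "\<exists>c. outer p s = sm c (phi (lin a b G1 G2))"
proof -
  from assms have "q = 0 \<or> s = 0" by (auto simp: valid_def outer_zero)
  then show ?thesis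
  proof
    assume "s = 0" then show ?thesis by (intro exI[of _ 0]) (simp add: mat_eq)
  next
    assume "q = 0"
    then have "outer q t = 0" by (simp add: outer_zero)
    with assms have "phi (outer p s) = - lin a b G1 G2" by (simp add: valid_def eq_neg_iff_add_eq_0)
    then have "outer p s = phi (- lin a b G1 G2)" by (metis phi_phi)
    then show ?thesis by (intro exI[of _ "-1"]) (simp add: mat_eq)
  qed
qed

lemma V0:
  assumes "valid H1 H2 K1 K2 G1 G2 p q s t 0 0"
  shows "outer p s = 0"
proof -
  have "lin 0 0 H1 H2 = 0" by (simp add: mat_eq)
  from V1[OF assms this] show ?thesis by (auto simp: mat_eq)
qed


definition colvec :: "mat2 \<Rightarrow> complex^2" where
  "colvec M = (if M$1$1 \<noteq> 0 \<or> M$2$1 \<noteq> 0 then (\<chi> i. M$i$1) else (\<chi> i. M$i$2))"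
definition rowvec :: "mat2 \<Rightarrow> complex^2" where
  "rowvec M = (if M$1$1 \<noteq> 0 \<or> M$1$2 \<noteq> 0 then (\<chi> j. M$1$j) else (\<chi> j. M$2$j))"

lemma colv:
  assumes "outer p t = sm m M" "m \<noteq> 0" "M \<noteq> 0"
  shows "\<exists>k. p = k *s colvec M"
proof (cases "M$1$1 \<noteq> 0 \<or> M$2$1 \<noteq> 0")
  case True
  have e: "p$i * t$j = m * M$i$j" for i j using assms(1) by (metis outer_nth sm_nth)
  have "t$1 \<noteq> 0" using True e[of 1 1] e[of 2 1] assms(2) by auto
  then show ?thesis using True e[of 1 1] e[of 2 1] assms(2)
    by (intro exI[of _ "m / t$1"]) (auto simp: colvec_def v_eq field_simps)
next
  case False
  then have F: "M$1$2 \<noteq> 0 \<or> M$2$2 \<noteq> 0" using assms(3) by (auto simp: mat_eq)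
  have e: "p$i * t$j = m * M$i$j" for i j using assms(1) by (metis outer_nth sm_nth)
  have "t$2 \<noteq> 0" using F e[of 1 2] e[of 2 2] assms(2) by auto
  then show ?thesis using False F e[of 1 2] e[of 2 2] assms(2)
    by (intro exI[of _ "m / t$2"]) (auto simp: colvec_def v_eq field_simps)
qed

lemma rowv:
  assumes "outer q s = sm m M" "m \<noteq> 0" "M \<noteq> 0"
  shows "\<exists>k. s = k *s rowvec M"
proof (cases "M$1$1 \<noteq> 0 \<or> M$1$2 \<noteq> 0")
  case True
  have e: "q$i * s$j = m * M$i$j" for i j using assms(1) by (metis outer_nth sm_nth)
  have "q$1 \<noteq> 0" using True e[of 1 1] e[of 1 2] assms(2) by auto
  then show ?thesis using True e[of 1 1] e[of 1 2] assms(2)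
    by (intro exI[of _ "m / q$1"]) (auto simp: rowvec_def v_eq field_simps)
next
  case False
  then have F: "M$2$1 \<noteq> 0 \<or> M$2$2 \<noteq> 0" using assms(3) by (auto simp: mat_eq)
  have e: "q$i * s$j = m * M$i$j" for i j using assms(1) by (metis outer_nth sm_nth)
  have "q$2 \<noteq> 0" using F e[of 2 1] e[of 2 2] assms(2) by auto
  then show ?thesis using False F e[of 2 1] e[of 2 2] assms(2)
    by (intro exI[of _ "m / q$2"]) (auto simp: rowvec_def v_eq field_simps)
qed

lemma outer_smul: "outer (k *s u) (l *s v) = sm (k*l) (outer u v)"
  by (simp add: mat_eq)

definition Yf where
  "Yf H1 H2 K1 K2 G1 G2 z1 z2 = (if lin z1 z2 H1 H2 = 0 \<or> lin z1 z2 K1 K2 = 0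
     then phi (lin z1 z2 G1 G2) else outer (colvec (lin z1 z2 H1 H2)) (rowvec (lin z1 z2 K1 K2)))"

lemma LineY:
  assumes "valid H1 H2 K1 K2 G1 G2 p q s t (m*z1) (m*z2)"
  shows "\<exists>c. outer p s = sm c (Yf H1 H2 K1 K2 G1 G2 z1 z2)"
proof (cases "m = 0")
  case True
  then have "outer p s = 0" using V0 assms by simp
  then show ?thesis by (intro exI[of _ 0]) (simp add: mat_eq)
next
  case m: False
  show ?thesis
  proof (cases "lin z1 z2 H1 H2 = 0 \<or> lin z1 z2 K1 K2 = 0")
    case True
    then have "lin (m*z1) (m*z2) H1 H2 = 0 \<or> lin (m*z1) (m*z2) K1 K2 = 0"
      by (auto simp: lin_scale mat_eq)
    then obtain c where "outer p s = sm c (phi (lin (m*z1) (m*z2) G1 G2))"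
      using V1[OF assms] V2[OF assms] by blast
    then have "outer p s = sm (c*m) (phi (lin z1 z2 G1 G2))"
      by (simp add: lin_scale phi_sm mat_eq)
    then show ?thesis using True by (auto simp: Yf_def)
  next
    case False
    from assms have h: "outer p t = sm m (lin z1 z2 H1 H2)" and k: "outer q s = sm m (lin z1 z2 K1 K2)"
      by (auto simp: valid_def lin_scale)
    obtain k1 where k1: "p = k1 *s colvec (lin z1 z2 H1 H2)" using colv[OF h m] False by blast
    obtain k2 where k2: "s = k2 *s rowvec (lin z1 z2 K1 K2)" using rowv[OF k m] False by blast
    show ?thesis using False k1 k2 by (auto simp: Yf_def outer_smul)
  qed
qed


lemma quad:
  fixes al be ga :: complex
  assumes "al \<noteq> 0 \<or> be \<noteq> 0 \<or> ga \<noteq> 0"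
  shows "\<exists>a1 b1 a2 b2. \<forall>w1 w2. al*w1^2 + be*w1*w2 + ga*w2^2 = 0 \<longrightarrow>
     (\<exists>m. w1 = m*a1 \<and> w2 = m*b1) \<or> (\<exists>m. w1 = m*a2 \<and> w2 = m*b2)"
proof (cases "al = 0")
  case False
  define d where "d = csqrt (be^2 - 4*al*ga)"
  have d2: "d^2 = be^2 - 4*al*ga" by (simp add: d_def)
  define r1 where "r1 = (-be + d)/(2*al)"
  define r2 where "r2 = (-be - d)/(2*al)"
  have fac: "al*w1^2 + be*w1*w2 + ga*w2^2 = al*(w1 - r1*w2)*(w1 - r2*w2)" for w1 w2
  proof -
    have s: "al*(r1+r2) = -be" using False by (simp add: r1_def r2_def field_simps)
    have d2': "be*be = d*d + al*(ga*4)" using d2 by (simp add: power2_eq_square)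
    have rr: "r1*r2 = (be*be - d*d)/(4*al*al)" using False
      by (simp add: r1_def r2_def field_simps)
    have "be*be - d*d = 4*al*ga" using d2' by simp
    then have p': "al*(r1*r2) = ga" using False rr by (simp add: field_simps)
    have "al*(w1 - r1*w2)*(w1 - r2*w2) = al*w1^2 - al*(r1+r2)*w1*w2 + al*(r1*r2)*w2^2"
      by (simp add: algebra_simps power2_eq_square)
    also have "\<dots> = al*w1^2 + be*w1*w2 + ga*w2^2" using s p' by (simp add: algebra_simps)
    finally show ?thesis by simp
  qed
  show ?thesis
  proof (intro exI allI impI)
    fix w1 w2 assume "al*w1^2 + be*w1*w2 + ga*w2^2 = 0"
    then have "w1 = r1*w2 \<or> w1 = r2*w2" using False by (simp add: fac)
    then show "(\<exists>m. w1 = m*r1 \<and> w2 = m*1) \<or> (\<exists>m. w1 = m*r2 \<and> w2 = m*1)"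
      by (auto simp: mult.commute)
  qed
next
  case True
  show ?thesis
  proof (cases "be = 0")
    case b: True
    with True assms have g: "ga \<noteq> 0" by simp
    show ?thesis
    proof (intro exI allI impI)
      fix w1 w2 assume "al*w1^2 + be*w1*w2 + ga*w2^2 = 0"
      then have "w2 = 0" using True b g by simp
      then show "(\<exists>m. w1 = m*1 \<and> w2 = m*0) \<or> (\<exists>m. w1 = m*1 \<and> w2 = m*0)" by auto
    qed
  next
    case b: False
    show ?thesis
    proof (intro exI allI impI)
      fix w1 w2 assume "al*w1^2 + be*w1*w2 + ga*w2^2 = 0"
      then have "w2 * (be*w1 + ga*w2) = 0" using True by (simp add: algebra_simps power2_eq_square)
      then have "w2 = 0 \<or> be*w1 + ga*w2 = 0" by (simp only: mult_eq_0_iff)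
      then have "w2 = 0 \<or> w1 = -ga*w2/be" using b by (auto simp: field_simps add_eq_0_iff)
      then show "(\<exists>m. w1 = m*1 \<and> w2 = m*0) \<or> (\<exists>m. w1 = m*ga \<and> w2 = m*(-be))"
      proof
        assume "w2 = 0" then show ?thesis by auto
      next
        assume "w1 = -ga*w2/be" then show ?thesis using b
          by (intro disjI2 exI[of _ "-w2/be"]) (auto simp: field_simps)
      qed
    qed
  qed
qed

lemma det2_lin: "det2 (lin a b H1 H2) = det2 H1 * a^2 + (det2 (H1+H2) - det2 H1 - det2 H2) * a * b + det2 H2 * b^2"
  by (simp add: det2_def algebra_simps power2_eq_square)

lemma lines_from_det:
  assumes "det2 (lin a0 b0 H1 H2) \<noteq> 0"
  shows "\<exists>a1 b1 a2 b2. \<forall>a b. det2 (lin a b H1 H2) = 0 \<longrightarrow>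
     (\<exists>m. a = m*a1 \<and> b = m*b1) \<or> (\<exists>m. a = m*a2 \<and> b = m*b2)"
proof -
  have "det2 H1 \<noteq> 0 \<or> (det2 (H1+H2) - det2 H1 - det2 H2) \<noteq> 0 \<or> det2 H2 \<noteq> 0"
    using assms by (auto simp: det2_lin)
  from quad[OF this] show ?thesis by (simp add: det2_lin)
qed


lemma rank1:
  assumes "det2 M = 0" shows "\<exists>u v. M = outer u v"
proof (cases "M$1$1 = 0")
  case False
  show ?thesis using False assms
    by (intro exI[of _ "vector [1, M$2$1/M$1$1]"] exI[of _ "vector [M$1$1, M$1$2]"])
       (auto simp: mat_eq det2_def field_simps)
next
  case z: True
  show ?thesis
  proof (cases "M$1$2 = 0")
    case False
    then have "M$2$1 = 0" using z assms by (auto simp: det2_def)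
    then show ?thesis using False z
      by (intro exI[of _ "vector [1, M$2$2/M$1$2]"] exI[of _ "vector [0, M$1$2]"])
         (auto simp: mat_eq field_simps)
  next
    case True
    then show ?thesis using z
      by (intro exI[of _ "vector [0, 1]"] exI[of _ "vector [M$2$1, M$2$2]"])
         (auto simp: mat_eq)
  qed
qed

lemma cross0:
  fixes u v :: "complex^2"
  assumes "u$1 * v$2 - u$2 * v$1 = 0"
  shows "\<exists>w al be. u = al *s w \<and> v = be *s w"
proof (cases "u = 0")
  case True then show ?thesis by (intro exI[of _ v] exI[of _ 0] exI[of _ 1]) simp
next
  case False
  show ?thesis
  proof (cases "u$1 = 0")
    case True
    then have "u$2 \<noteq> 0" using False by (auto simp: v_eq)
    then show ?thesis using True assms
      by (intro exI[of _ u] exI[of _ 1] exI[of _ "v$2/u$2"]) (auto simp: v_eq field_simps)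
  next
    case f: False
    then show ?thesis using assms
      by (intro exI[of _ u] exI[of _ 1] exI[of _ "v$1/u$1"]) (auto simp: v_eq field_simps)
  qed
qed

lemma det2_sum_outer: "det2 (outer p1 t1 + outer p2 t2) = (p1$1*p2$2 - p1$2*p2$1) * (t1$1*t2$2 - t1$2*t2$1)"
  by (simp add: det2_def algebra_simps)

lemma typeL:
  assumes "det2 H1 = 0" "det2 H2 = 0" "det2 (H1 + H2) = 0"
  shows "(\<exists>p0 x1 x2. H1 = outer p0 x1 \<and> H2 = outer p0 x2) \<or> (\<exists>t0 x1 x2. H1 = outer x1 t0 \<and> H2 = outer x2 t0)"
proof -
  obtain p1 t1 where 1: "H1 = outer p1 t1" using rank1 assms(1) by blast
  obtain p2 t2 where 2: "H2 = outer p2 t2" using rank1 assms(2) by blast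
  have "(p1$1*p2$2 - p1$2*p2$1) * (t1$1*t2$2 - t1$2*t2$1) = 0" using assms(3) 1 2 det2_sum_outer by metis
  then show ?thesis
  proof (cases "p1$1*p2$2 - p1$2*p2$1 = 0")
    case True
    then obtain w al be where "p1 = al *s w" "p2 = be *s w" using cross0 by blast
    then have "H1 = outer w (al *s t1)" "H2 = outer w (be *s t2)" using 1 2 by (auto simp: mat_eq)
    then show ?thesis by blast
  next
    case False
    then have "t1$1*t2$2 - t1$2*t2$1 = 0" using \<open>_ * _ = 0\<close> by simp
    then obtain w al be where "t1 = al *s w" "t2 = be *s w" using cross0 by blast
    then have "H1 = outer (al *s p1) w" "H2 = outer (be *s p2) w" using 1 2 by (auto simp: mat_eq)
    then show ?thesis by blast
  qed
qed

lemma elim2: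
  fixes a b a0 b0 x y :: complex
  assumes "a*x + b*y = 0" "a0*x + b0*y = 0"
  shows "(a*b0 - b*a0)*x = 0 \<and> (a*b0 - b*a0)*y = 0"
proof -
  have "(a*b0 - b*a0)*x = b0*(a*x+b*y) - b*(a0*x+b0*y)" by (simp add: algebra_simps)
  moreover have "(a*b0 - b*a0)*y = a*(a0*x+b0*y) - a0*(a*x+b*y)" by (simp add: algebra_simps)
  ultimately show ?thesis using assms by simp
qed

lemma kerL:
  assumes "\<not> (H1 = 0 \<and> H2 = 0)"
  shows "\<exists>z1 z2. \<forall>a b. lin a b H1 H2 = 0 \<longrightarrow> (\<exists>m. a = m*z1 \<and> b = m*z2)"
proof (cases "\<exists>a0 b0. (a0 \<noteq> 0 \<or> b0 \<noteq> 0) \<and> lin a0 b0 H1 H2 = 0")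
  case False
  show ?thesis
    by (rule exI[of _ 0], rule exI[of _ 0]) (use False in auto)
next
  case True
  then obtain a0 b0 where ab: "a0 \<noteq> 0 \<or> b0 \<noteq> 0" "lin a0 b0 H1 H2 = 0" by blast
  show ?thesis
  proof (rule exI[of _ a0], rule exI[of _ b0], intro allI impI)
    fix a b assume l: "lin a b H1 H2 = 0"
    have e: "a * H1$i$j + b * H2$i$j = 0" "a0 * H1$i$j + b0 * H2$i$j = 0" for i j
      using l ab(2) by (metis lin_nth zero_index)+
    show "\<exists>m. a = m*a0 \<and> b = m*b0"
    proof (cases "a*b0 - b*a0 = 0")
      case True
      show ?thesis
      proof (cases "a0 = 0")
        case False then show ?thesis using True
          by (intro exI[of _ "a/a0"]) (auto simp: field_simps)
      next
        case z: True then have "b0 \<noteq> 0" using ab(1) by simp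
        then show ?thesis using True z
          by (intro exI[of _ "b/b0"]) (auto simp: field_simps)
      qed
    next
      case False
      have "(a*b0 - b*a0) * H1$i$j = 0 \<and> (a*b0 - b*a0) * H2$i$j = 0" for i j
        using elim2[OF e(1)[of i j] e(2)[of i j]] .
      then have "H1 = 0" "H2 = 0" using False by (auto simp: mat_eq)
      then show ?thesis using assms by simp
    qed
  qed
qed


definition v4 :: "mat2 \<Rightarrow> complex^4" where
  "v4 Y = (\<chi> k. if k = 1 then Y$1$1 else if k = 2 then Y$1$2 else if k = 3 then Y$2$1 else Y$2$2)"

lemma perp3: "\<exists>T. T \<noteq> 0 \<and> pr T Y1 = 0 \<and> pr T Y2 = 0 \<and> pr T Y3 = 0"
proof -
  define A :: "complex^4^4" where
    "A = (\<chi> i. if i = 1 then v4 Y1 else if i = 2 then v4 Y2 else if i = 3 then v4 Y3 else 0)"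
  have "row 4 A = 0" by (simp add: A_def row_def vec_eq_iff)
  then have d: "det A = 0" by (rule det_zero_row)
  have "\<not> (\<forall>x. A *v x = 0 \<longrightarrow> x = 0)"
  proof
    assume "\<forall>x. A *v x = 0 \<longrightarrow> x = 0"
    then obtain B where "B ** A = mat 1" using matrix_left_invertible_ker by blast
    then have "det B * det A = 1" by (metis det_I det_mul)
    with d show False by simp
  qed
  then obtain x where x: "A *v x = 0" "x \<noteq> 0" by blast
  define T :: mat2 where "T = (\<chi> i j. x$(if i = 1 then (if j = 1 then 1 else 2) else (if j = 1 then 3 else 4)))"
  have e: "(A *v x)$k = 0" for k using x by simp
  have ev: "pr T Y = (\<Sum>k\<in>UNIV. (v4 Y)$k * x$k)" for Y
    by (simp add: pr_def T_def sum_4 v4_def algebra_simps)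
  have "pr T Y1 = (A *v x)$1" "pr T Y2 = (A *v x)$2" "pr T Y3 = (A *v x)$3"
    by (simp_all add: ev matrix_vector_mult_def A_def)
  moreover have "T \<noteq> 0"
  proof
    assume "T = 0"
    then have t: "T$i$j = 0" for i j by simp
    have "x$1 = 0" "x$2 = 0" "x$3 = 0" "x$4 = 0"
      using t[of 1 1] t[of 1 2] t[of 2 1] t[of 2 2] by (simp_all add: T_def)
    then have "x$k = 0" for k using exhaust_4[of k] by auto
    with x show False by (simp add: vec_eq_iff)
  qed
  ultimately show ?thesis using e by metis
qed


definition Span3 :: "mat2 \<Rightarrow> mat2 \<Rightarrow> mat2 \<Rightarrow> mat2 \<Rightarrow> bool" where
  "Span3 Y1 Y2 Y3 X \<longleftrightarrow> (\<exists>c1 c2 c3. X = sm c1 Y1 + sm c2 Y2 + sm c3 Y3)"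

lemma span3_1: "X = sm c Y1 \<Longrightarrow> Span3 Y1 Y2 Y3 X"
  unfolding Span3_def by (rule exI[of _ c], rule exI[of _ 0], rule exI[of _ 0]) (simp add: mat_eq)
lemma span3_2: "X = sm c Y2 \<Longrightarrow> Span3 Y1 Y2 Y3 X"
  unfolding Span3_def by (rule exI[of _ 0], rule exI[of _ c], rule exI[of _ 0]) (simp add: mat_eq)
lemma span3_3: "X = sm c Y3 \<Longrightarrow> Span3 Y1 Y2 Y3 X"
  unfolding Span3_def by (rule exI[of _ 0], rule exI[of _ 0], rule exI[of _ c]) (simp add: mat_eq)

lemma par_col:
  assumes "outer p t = outer u x" "outer u x \<noteq> 0"
  shows "\<exists>k. p = k *s u"
proof -
  have e: "p$i * t$j = u$i * x$j" for i j using assms(1) by (metis outer_nth)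
  obtain j where "x$j \<noteq> 0" using assms(2) by (auto simp: mat_eq)
  then have tj: "t$j \<noteq> 0" using e[of 1 j] e[of 2 j] assms(2) by (auto simp: mat_eq)
  show ?thesis using e[of 1 j] e[of 2 j] tj
    by (intro exI[of _ "x$j / t$j"]) (auto simp: v_eq field_simps)
qed

lemma par_row:
  assumes "outer q s = outer y v" "outer y v \<noteq> 0"
  shows "\<exists>k. s = k *s v"
proof -
  have e: "q$i * s$j = y$i * v$j" for i j using assms(1) by (metis outer_nth)
  obtain i where "y$i \<noteq> 0" using assms(2) by (auto simp: mat_eq)
  then have tj: "q$i \<noteq> 0" using e[of i 1] e[of i 2] assms(2) by (auto simp: mat_eq)
  show ?thesis using e[of i 1] e[of i 2] tj
    by (intro exI[of _ "y$i / q$i"]) (auto simp: v_eq field_simps)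
qed

lemma lin_outer1: "lin a b (outer p0 x1) (outer p0 x2) = outer p0 (a *s x1 + b *s x2)"
  by (simp add: mat_eq algebra_simps)
lemma lin_outer2: "lin a b (outer x1 t0) (outer x2 t0) = outer (a *s x1 + b *s x2) t0"
  by (simp add: mat_eq algebra_simps)

lemma dep_cross:
  fixes x1 x2 :: "complex^2"
  assumes "a *s x1 + b *s x2 = 0" "a \<noteq> 0 \<or> b \<noteq> 0"
  shows "x1$1 * x2$2 - x1$2 * x2$1 = 0"
proof -
  have "x1$1 * a + x2$1 * b = 0" "x1$2 * a + x2$2 * b = 0" using assms(1)
    by (auto simp: v_eq algebra_simps)
  from elim2[OF this] assms(2) show ?thesis by (auto simp: algebra_simps)
qed

lemma lin_G_scale: "phi (lin (m*z1) (m*z2) G1 G2) = sm m (phi (lin z1 z2 G1 G2))"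
  by (simp add: lin_scale phi_sm)

lemma ker_case:
  assumes v: "valid H1 H2 K1 K2 G1 G2 p q s t a b"
    and z: "\<forall>a b. lin a b H1 H2 = 0 \<longrightarrow> (\<exists>m. a = m*z1 \<and> b = m*z2)"
    and h: "lin a b H1 H2 = 0"
  shows "\<exists>c. outer p s = sm c (phi (lin z1 z2 G1 G2))"
proof -
  obtain m where m: "a = m*z1" "b = m*z2" using z h by blast
  obtain c where "outer p s = sm c (phi (lin a b G1 G2))" using V1[OF v h] by blast
  then have "outer p s = sm (c*m) (phi (lin z1 z2 G1 G2))" using m by (simp add: lin_G_scale mat_eq)
  then show ?thesis by blast
qed

lemma kerK_case:
  assumes v: "valid H1 H2 K1 K2 G1 G2 p q s t a b"
    and z: "\<forall>a b. lin a b K1 K2 = 0 \<longrightarrow> (\<exists>m. a = m*z1 \<and> b = m*z2)"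
    and h: "lin a b K1 K2 = 0"
  shows "\<exists>c. outer p s = sm c (phi (lin z1 z2 G1 G2))"
proof -
  obtain m where m: "a = m*z1" "b = m*z2" using z h by blast
  obtain c where "outer p s = sm c (phi (lin a b G1 G2))" using V2[OF v h] by blast
  then have "outer p s = sm (c*m) (phi (lin z1 z2 G1 G2))" using m by (simp add: lin_G_scale mat_eq)
  then show ?thesis by blast
qed


definition e1v :: "complex^2" where "e1v = (\<chi> i. if i = 1 then 1 else 0)"
definition e2v :: "complex^2" where "e2v = (\<chi> i. if i = 1 then 0 else 1)"

lemma outer_decomp1: "outer (k *s p0) s = sm (k * s$1) (outer p0 e1v) + sm (k * s$2) (outer p0 e2v)"
  by (simp add: mat_eq e1v_def e2v_def)
lemma outer_decomp2: "outer p (k *s s0) = sm (k * p$1) (outer e1v s0) + sm (k * p$2) (outer e2v s0)"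
  by (simp add: mat_eq e1v_def e2v_def)

lemma lin10: "lin 1 0 M N = M" by (simp add: mat_eq)
lemma lin01: "lin 0 1 M N = N" by (simp add: mat_eq)
lemma lin11: "lin 1 1 M N = M + N" by (simp add: mat_eq)

lemma lines_case:
  assumes "\<forall>a b. det2 (lin a b H1 H2) = 0 \<longrightarrow> (\<exists>m. a = m*a1 \<and> b = m*b1) \<or> (\<exists>m. a = m*a2 \<and> b = m*b2)"
    and v: "valid H1 H2 K1 K2 G1 G2 p q s t a b"
    and d: "det2 (lin a b H1 H2) = 0"
  shows "Span3 (Yf H1 H2 K1 K2 G1 G2 a1 b1) (Yf H1 H2 K1 K2 G1 G2 a2 b2) 0 (outer p s)"
proof -
  from assms(1) d have "(\<exists>m. a = m*a1 \<and> b = m*b1) \<or> (\<exists>m. a = m*a2 \<and> b = m*b2)" by blast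
  then show ?thesis
  proof
    assume "\<exists>m. a = m*a1 \<and> b = m*b1"
    then obtain m where "a = m*a1" "b = m*b1" by blast
    then show ?thesis using LineY[of H1 H2 K1 K2 G1 G2 p q s t m a1 b1] v span3_1 by blast
  next
    assume "\<exists>m. a = m*a2 \<and> b = m*b2"
    then obtain m where "a = m*a2" "b = m*b2" by blast
    then show ?thesis using LineY[of H1 H2 K1 K2 G1 G2 p q s t m a2 b2] v span3_2 by blast
  qed
qed

lemma main_span:
  "\<exists>Y1 Y2 Y3. \<forall>p q s t a b. valid H1 H2 K1 K2 G1 G2 p q s t a b \<longrightarrow> Span3 Y1 Y2 Y3 (outer p s)"
proof (cases "\<exists>a0 b0. det2 (lin a0 b0 H1 H2) \<noteq> 0")
  case True
  then obtain a0 b0 where "det2 (lin a0 b0 H1 H2) \<noteq> 0" by blast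
  from lines_from_det[OF this] obtain a1 b1 a2 b2 where
    L: "\<forall>a b. det2 (lin a b H1 H2) = 0 \<longrightarrow> (\<exists>m. a = m*a1 \<and> b = m*b1) \<or> (\<exists>m. a = m*a2 \<and> b = m*b2)"
    by blast
  show ?thesis
  proof (intro exI allI impI)
    fix p q s t a b assume v: "valid H1 H2 K1 K2 G1 G2 p q s t a b"
    then have "det2 (lin a b H1 H2) = 0" by (metis valid_def det2_outer)
    from lines_case[OF L v this]
    show "Span3 (Yf H1 H2 K1 K2 G1 G2 a1 b1) (Yf H1 H2 K1 K2 G1 G2 a2 b2) 0 (outer p s)" .
  qed
next
  case noH: False
  show ?thesis
  proof (cases "\<exists>a0 b0. det2 (lin a0 b0 K1 K2) \<noteq> 0")
    case True
    then obtain a0 b0 where "det2 (lin a0 b0 K1 K2) \<noteq> 0" by blast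
    from lines_from_det[OF this] obtain a1 b1 a2 b2 where
      L: "\<forall>a b. det2 (lin a b K1 K2) = 0 \<longrightarrow> (\<exists>m. a = m*a1 \<and> b = m*b1) \<or> (\<exists>m. a = m*a2 \<and> b = m*b2)"
      by blast
    show ?thesis
    proof (intro exI allI impI)
      fix p q s t a b assume v: "valid H1 H2 K1 K2 G1 G2 p q s t a b"
      then have d: "det2 (lin a b K1 K2) = 0" by (metis valid_def det2_outer)
      from L d have "(\<exists>m. a = m*a1 \<and> b = m*b1) \<or> (\<exists>m. a = m*a2 \<and> b = m*b2)" by blast
      then show "Span3 (Yf H1 H2 K1 K2 G1 G2 a1 b1) (Yf H1 H2 K1 K2 G1 G2 a2 b2) 0 (outer p s)"
      proof
        assume "\<exists>m. a = m*a1 \<and> b = m*b1"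
        then obtain m where "a = m*a1" "b = m*b1" by blast
        then show ?thesis using LineY[of H1 H2 K1 K2 G1 G2 p q s t m a1 b1] v span3_1 by blast
      next
        assume "\<exists>m. a = m*a2 \<and> b = m*b2"
        then obtain m where "a = m*a2" "b = m*b2" by blast
        then show ?thesis using LineY[of H1 H2 K1 K2 G1 G2 p q s t m a2 b2] v span3_2 by blast
      qed
    qed
  next
    case noK: False
    show ?thesis
    proof (cases "(H1 = 0 \<and> H2 = 0) \<or> (K1 = 0 \<and> K2 = 0)")
      case True
      show ?thesis
      proof (intro exI allI impI)
        fix p q s t a b assume v: "valid H1 H2 K1 K2 G1 G2 p q s t a b"
        have "lin a b H1 H2 = 0 \<or> lin a b K1 K2 = 0" using True by (auto simp: mat_eq)
        then obtain c where "outer p s = sm c (phi (lin a b G1 G2))" using V1[OF v] V2[OF v] by blast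
        then have "outer p s = sm (c*a) (phi G1) + sm (c*b) (phi G2) + sm 0 0"
          by (simp add: mat_eq algebra_simps)
        then show "Span3 (phi G1) (phi G2) 0 (outer p s)" unfolding Span3_def by blast
      qed
    next
      case nz: False
      have aH: "\<forall>a b. det2 (lin a b H1 H2) = 0" using noH by blast
      have aK: "\<forall>a b. det2 (lin a b K1 K2) = 0" using noK by blast
      have hH: "det2 H1 = 0" "det2 H2 = 0" "det2 (H1 + H2) = 0"
        using aH[rule_format, of 1 0] aH[rule_format, of 0 1] aH[rule_format, of 1 1]
        by (simp_all add: lin10 lin01 lin11)
      have hK: "det2 K1 = 0" "det2 K2 = 0" "det2 (K1 + K2) = 0"
        using aK[rule_format, of 1 0] aK[rule_format, of 0 1] aK[rule_format, of 1 1]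
        by (simp_all add: lin10 lin01 lin11)
      have Hnz: "\<not> (H1 = 0 \<and> H2 = 0)" and Knz: "\<not> (K1 = 0 \<and> K2 = 0)" using nz by auto
      obtain zh1 zh2 where zH: "\<forall>a b. lin a b H1 H2 = 0 \<longrightarrow> (\<exists>m. a = m*zh1 \<and> b = m*zh2)"
        using kerL[OF Hnz] by blast
      obtain zk1 zk2 where zK: "\<forall>a b. lin a b K1 K2 = 0 \<longrightarrow> (\<exists>m. a = m*zk1 \<and> b = m*zk2)"
        using kerL[OF Knz] by blast
      show ?thesis
      proof (cases "\<exists>p0 x1 x2. H1 = outer p0 x1 \<and> H2 = outer p0 x2")
        case True
        then obtain p0 x1 x2 where H: "H1 = outer p0 x1" "H2 = outer p0 x2" by blast
        show ?thesis
        proof (intro exI allI impI)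
          fix p q s t a b assume v: "valid H1 H2 K1 K2 G1 G2 p q s t a b"
          show "Span3 (outer p0 e1v) (outer p0 e2v) (phi (lin zh1 zh2 G1 G2)) (outer p s)"
          proof (cases "lin a b H1 H2 = 0")
            case True
            then show ?thesis using ker_case[OF v zH True] span3_3 by blast
          next
            case False
            have "outer p t = outer p0 (a *s x1 + b *s x2)" using v H by (simp add: valid_def lin_outer1)
            moreover have "outer p0 (a *s x1 + b *s x2) \<noteq> 0" using False H by (simp add: lin_outer1)
            ultimately obtain k where "p = k *s p0" using par_col by blast
            then have "outer p s = sm (k * s$1) (outer p0 e1v) + sm (k * s$2) (outer p0 e2v) + sm 0 (phi (lin zh1 zh2 G1 G2))"
              by (simp add: outer_decomp1 mat_eq)
            then show ?thesis unfolding Span3_def by blast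
          qed
        qed
      next
        case notHi: False
        obtain t0 x1 x2 where H: "H1 = outer x1 t0" "H2 = outer x2 t0"
          using typeL[OF hH] notHi by blast
        show ?thesis
        proof (cases "\<exists>s0 y1 y2. K1 = outer y1 s0 \<and> K2 = outer y2 s0")
          case True
          then obtain s0 y1 y2 where K: "K1 = outer y1 s0" "K2 = outer y2 s0" by blast
          show ?thesis
          proof (intro exI allI impI)
            fix p q s t a b assume v: "valid H1 H2 K1 K2 G1 G2 p q s t a b"
            show "Span3 (outer e1v s0) (outer e2v s0) (phi (lin zk1 zk2 G1 G2)) (outer p s)"
            proof (cases "lin a b K1 K2 = 0")
              case True
              then show ?thesis using kerK_case[OF v zK True] span3_3 by blast
            next
              case False
              have "outer q s = outer (a *s y1 + b *s y2) s0" using v K by (simp add: valid_def lin_outer2)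
              moreover have "outer (a *s y1 + b *s y2) s0 \<noteq> 0" using False K by (simp add: lin_outer2)
              ultimately obtain k where "s = k *s s0" using par_row by blast
              then have "outer p s = sm (k * p$1) (outer e1v s0) + sm (k * p$2) (outer e2v s0) + sm 0 (phi (lin zk1 zk2 G1 G2))"
                by (simp add: outer_decomp2 mat_eq)
              then show ?thesis unfolding Span3_def by blast
            qed
          qed
        next
          case notKii: False
          obtain q0 y1 y2 where K: "K1 = outer q0 y1" "K2 = outer q0 y2"
            using typeL[OF hK] notKii by blast
          have kerH: "lin a b H1 H2 = 0 \<Longrightarrow> a = 0 \<and> b = 0" for a b
          proof (rule ccontr)
            assume l: "lin a b H1 H2 = 0" and ab: "\<not> (a = 0 \<and> b = 0)"
            have "outer (a *s x1 + b *s x2) t0 = 0" using l H by (simp add: lin_outer2)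
            then have "a *s x1 + b *s x2 = 0 \<or> t0 = 0" by (simp add: outer_zero)
            then show False
            proof
              assume "t0 = 0"
              then have "H1 = outer 0 0" "H2 = outer 0 0" using H by (simp_all add: mat_eq)
              then show False using notHi by blast
            next
              assume "a *s x1 + b *s x2 = 0"
              from dep_cross[OF this] ab have "x1$1 * x2$2 - x1$2 * x2$1 = 0" by blast
              then obtain w al be where "x1 = al *s w" "x2 = be *s w" using cross0 by blast
              then have "H1 = outer w (al *s t0)" "H2 = outer w (be *s t0)" using H by (simp_all add: mat_eq)
              then show False using notHi by blast
            qed
          qed
          have kerK: "lin a b K1 K2 = 0 \<Longrightarrow> a = 0 \<and> b = 0" for a b
          proof (rule ccontr)
            assume l: "lin a b K1 K2 = 0" and ab: "\<not> (a = 0 \<and> b = 0)"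
            have "outer q0 (a *s y1 + b *s y2) = 0" using l K by (simp add: lin_outer1)
            then have "a *s y1 + b *s y2 = 0 \<or> q0 = 0" by (auto simp: outer_zero)
            then show False
            proof
              assume "q0 = 0"
              then have "K1 = outer 0 0" "K2 = outer 0 0" using K by (simp_all add: mat_eq)
              then show False using notKii by blast
            next
              assume "a *s y1 + b *s y2 = 0"
              from dep_cross[OF this] ab have "y1$1 * y2$2 - y1$2 * y2$1 = 0" by blast
              then obtain w al be where "y1 = al *s w" "y2 = be *s w" using cross0 by blast
              then have "K1 = outer (al *s q0) w" "K2 = outer (be *s q0) w" using K by (simp_all add: mat_eq)
              then show False using notKii by blast
            qed
          qed
          show ?thesis
          proof (intro exI allI impI)
            fix p q s t a b assume v: "valid H1 H2 K1 K2 G1 G2 p q s t a b"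
            show "Span3 (outer x1 y1) (outer x1 y2 + outer x2 y1) (outer x2 y2) (outer p s)"
            proof (cases "a = 0 \<and> b = 0")
              case True
              then have "outer p s = 0" using V0 v by blast
              then show ?thesis using span3_1[of _ 0] by (simp add: mat_eq)
            next
              case False
              have hn: "lin a b H1 H2 \<noteq> 0" and kn: "lin a b K1 K2 \<noteq> 0" using kerH kerK False by blast+
              have "outer p t = outer (a *s x1 + b *s x2) t0" using v H by (simp add: valid_def lin_outer2)
              moreover have "outer (a *s x1 + b *s x2) t0 \<noteq> 0" using hn H by (simp add: lin_outer2)
              ultimately obtain k where k: "p = k *s (a *s x1 + b *s x2)" using par_col by blast
              have "outer q s = outer q0 (a *s y1 + b *s y2)" using v K by (simp add: valid_def lin_outer1)
              moreover have "outer q0 (a *s y1 + b *s y2) \<noteq> 0" using kn K by (simp add: lin_outer1)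
              ultimately obtain l where l: "s = l *s (a *s y1 + b *s y2)" using par_row by blast
              have "outer p s = sm (k*l*a*a) (outer x1 y1) + sm (k*l*a*b) (outer x1 y2 + outer x2 y1) + sm (k*l*b*b) (outer x2 y2)"
                using k l by (simp add: mat_eq algebra_simps)
              then show ?thesis unfolding Span3_def by blast
            qed
          qed
        qed
      qed
    qed
  qed
qed


lemma divh: "(d::complex) \<noteq> 0 \<Longrightarrow> d * x = - Y \<Longrightarrow> x = - Y / d"
  by (simp add: field_simps)

lemma elim_lemma:
  fixes n :: "'c \<Rightarrow> nat \<Rightarrow> complex" and nu :: "nat \<Rightarrow> 'k \<Rightarrow> complex"
  assumes "finite I" "finite J"
    and "\<forall>c\<in>I. \<forall>k. (\<Sum>j\<in>J. n c j * nu j k) = 0"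
    and "\<forall>g. (\<forall>j\<in>J. (\<Sum>c\<in>I. g c * n c j) = 0) \<longrightarrow> (\<forall>c\<in>I. g c = 0)"
  shows "\<exists>S\<subseteq>J. card S + card I \<le> card J \<and> (\<forall>j\<in>J. \<exists>a. \<forall>k. nu j k = (\<Sum>s\<in>S. a s * nu s k))"
  using assms
proof (induction I arbitrary: J n rule: finite_induct)
  case empty
  show ?case
  proof (intro exI[of _ J] conjI ballI)
    fix j assume j: "j \<in> J"
    show "\<exists>a. \<forall>k. nu j k = (\<Sum>s\<in>J. a s * nu s k)"
    proof (rule exI[of _ "\<lambda>s. if s = j then 1 else 0"], rule allI)
      fix k
      have "(\<Sum>s\<in>J. (if s = j then 1 else 0) * nu s k) = (\<Sum>s\<in>J. if s = j then nu s k else 0)"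
        by (rule sum.cong) auto
      also have "\<dots> = nu j k" using j empty.prems(1) by simp
      finally show "nu j k = (\<Sum>s\<in>J. (if s = j then 1 else 0) * nu s k)" by simp
    qed
  qed auto
next
  case (insert c0 I')
  have fJ: "finite J" by fact
  have rel: "\<forall>c\<in>insert c0 I'. \<forall>k. (\<Sum>j\<in>J. n c j * nu j k) = 0" by fact
  have ind: "\<forall>g. (\<forall>j\<in>J. (\<Sum>c\<in>insert c0 I'. g c * n c j) = 0) \<longrightarrow> (\<forall>c\<in>insert c0 I'. g c = 0)" by fact
  have "\<exists>j0\<in>J. n c0 j0 \<noteq> 0"
  proof (rule ccontr)
    assume "\<not> (\<exists>j0\<in>J. n c0 j0 \<noteq> 0)"
    have "\<forall>j\<in>J. (\<Sum>c\<in>insert c0 I'. (if c = c0 then 1 else 0) * n c j) = 0"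
    proof
      fix j assume "j \<in> J"
      have "(\<Sum>c\<in>I'. (if c = c0 then 1 else 0) * n c j) = 0"
        using insert.hyps by (intro sum.neutral) auto
      then show "(\<Sum>c\<in>insert c0 I'. (if c = c0 then 1 else 0) * n c j) = 0"
        using insert.hyps \<open>j \<in> J\<close> \<open>\<not> (\<exists>j0\<in>J. n c0 j0 \<noteq> 0)\<close> by simp
    qed
    then have "\<forall>c\<in>insert c0 I'. (\<lambda>c. if c = c0 then 1 else 0 :: complex) c = 0"
      using ind[rule_format, of "\<lambda>c. if c = c0 then 1 else 0"] by blast
    then show False by simp
  qed
  then obtain j0 where j0: "j0 \<in> J" "n c0 j0 \<noteq> 0" by blast
  define J' where "J' = J - {j0}"
  define n' where "n' c j = n c j - (n c j0 / n c0 j0) * n c0 j" for c j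
  have fJ': "finite J'" using fJ by (simp add: J'_def)
  have n'j0: "n' c j0 = 0" for c using j0 by (simp add: n'_def)
  have sumJ: "(\<Sum>j\<in>J. f j) = f j0 + (\<Sum>j\<in>J'. f j)" for f :: "nat \<Rightarrow> complex"
    using fJ j0 by (simp add: J'_def sum.remove)
  have rel': "\<forall>c\<in>I'. \<forall>k. (\<Sum>j\<in>J'. n' c j * nu j k) = 0"
  proof (intro ballI allI)
    fix c k assume c: "c \<in> I'"
    have "(\<Sum>j\<in>J'. n' c j * nu j k) = (\<Sum>j\<in>J. n' c j * nu j k)" by (simp add: sumJ n'j0)
    also have "\<dots> = (\<Sum>j\<in>J. n c j * nu j k) - (n c j0 / n c0 j0) * (\<Sum>j\<in>J. n c0 j * nu j k)"
      by (simp add: n'_def algebra_simps sum_subtractf sum_distrib_left)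
    also have "\<dots> = 0" using rel c by simp
    finally show "(\<Sum>j\<in>J'. n' c j * nu j k) = 0" .
  qed
  have ind': "\<forall>g. (\<forall>j\<in>J'. (\<Sum>c\<in>I'. g c * n' c j) = 0) \<longrightarrow> (\<forall>c\<in>I'. g c = 0)"
  proof (intro allI impI)
    fix g assume g: "\<forall>j\<in>J'. (\<Sum>c\<in>I'. g c * n' c j) = 0"
    define g' where "g' c = (if c = c0 then - (\<Sum>c\<in>I'. g c * n c j0) / n c0 j0 else g c)" for c
    have key: "(\<Sum>c\<in>insert c0 I'. g' c * n c j) = (\<Sum>c\<in>I'. g c * n' c j)" for j
    proof -
      have eq1: "(\<Sum>c\<in>insert c0 I'. g' c * n c j) = g' c0 * n c0 j + (\<Sum>c\<in>I'. g' c * n c j)"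
        using insert.hyps by simp
      have eq1b: "(\<Sum>c\<in>I'. g' c * n c j) = (\<Sum>c\<in>I'. g c * n c j)"
        using insert.hyps by (intro sum.cong) (auto simp: g'_def)
      have eq2: "(\<Sum>c\<in>I'. g c * n' c j) = (\<Sum>c\<in>I'. g c * n c j) - (\<Sum>c\<in>I'. g c * n c j0) / n c0 j0 * n c0 j"
        by (simp add: n'_def algebra_simps sum_subtractf sum_distrib_left sum_divide_distrib sum_distrib_right)
      have eq3: "g' c0 = - (\<Sum>c\<in>I'. g c * n c j0) / n c0 j0" by (simp add: g'_def)
      show ?thesis by (simp only: eq1 eq1b eq2 eq3) (simp add: algebra_simps)
    qed
    have "\<forall>j\<in>J. (\<Sum>c\<in>insert c0 I'. g' c * n c j) = 0"
    proof
      fix j assume "j \<in> J"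
      show "(\<Sum>c\<in>insert c0 I'. g' c * n c j) = 0"
      proof (cases "j = j0")
        case True then show ?thesis by (simp add: key n'j0)
      next
        case False then have "j \<in> J'" using \<open>j \<in> J\<close> by (simp add: J'_def)
        then show ?thesis using g key by simp
      qed
    qed
    then have "\<forall>c\<in>insert c0 I'. g' c = 0" using ind by blast
    then show "\<forall>c\<in>I'. g c = 0" using insert.hyps by (auto simp: g'_def split: if_splits)
  qed
  from insert.IH[OF fJ' rel' ind'] obtain S where
    S: "S \<subseteq> J'" "card S + card I' \<le> card J'" "\<forall>j\<in>J'. \<exists>a. \<forall>k. nu j k = (\<Sum>s\<in>S. a s * nu s k)"
    by blast
  from S(3) obtain A where A: "\<forall>j\<in>J'. \<forall>k. nu j k = (\<Sum>s\<in>S. A j s * nu s k)" by metis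
  have nuj0: "nu j0 k = (\<Sum>s\<in>S. (- (\<Sum>j\<in>J'. n c0 j * A j s) / n c0 j0) * nu s k)" for k
  proof -
    have "(\<Sum>j\<in>J. n c0 j * nu j k) = 0" using rel by simp
    then have "n c0 j0 * nu j0 k = - (\<Sum>j\<in>J'. n c0 j * nu j k)" by (simp add: sumJ eq_neg_iff_add_eq_0)
    also have "(\<Sum>j\<in>J'. n c0 j * nu j k) = (\<Sum>j\<in>J'. n c0 j * (\<Sum>s\<in>S. A j s * nu s k))"
      using A by (intro sum.cong) auto
    also have "\<dots> = (\<Sum>s\<in>S. (\<Sum>j\<in>J'. n c0 j * A j s) * nu s k)"
      by (simp add: sum_distrib_left sum_distrib_right mult.assoc) (rule sum.swap)
    finally have "n c0 j0 * nu j0 k = - (\<Sum>s\<in>S. (\<Sum>j\<in>J'. n c0 j * A j s) * nu s k)" .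
    have e: "nu j0 k = - (\<Sum>s\<in>S. (\<Sum>j\<in>J'. n c0 j * A j s) * nu s k) / n c0 j0"
      by (rule divh[OF j0(2)]) fact
    have "(\<Sum>s\<in>S. (- (\<Sum>j\<in>J'. n c0 j * A j s) / n c0 j0) * nu s k)
        = (\<Sum>s\<in>S. - ((\<Sum>j\<in>J'. n c0 j * A j s) * nu s k) / n c0 j0)"
      by (intro sum.cong) auto
    also have "\<dots> = - (\<Sum>s\<in>S. (\<Sum>j\<in>J'. n c0 j * A j s) * nu s k) / n c0 j0"
      by (simp only: sum_divide_distrib[symmetric] sum_negf)
    finally show ?thesis using e by simp
  qed
  have cJ: "card J = Suc (card J')" using fJ j0 card_gt_0_iff[of J] by (auto simp: J'_def)
  show ?case
  proof (intro exI[of _ S] conjI ballI)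
    show "S \<subseteq> J" using S(1) by (auto simp: J'_def)
    show "card S + card (insert c0 I') \<le> card J" using S(2) insert.hyps cJ by simp
    fix j assume "j \<in> J"
    show "\<exists>a. \<forall>k. nu j k = (\<Sum>s\<in>S. a s * nu s k)"
    proof (cases "j = j0")
      case True then show ?thesis using nuj0
        by (intro exI[of _ "\<lambda>s. - (\<Sum>j\<in>J'. n c0 j * A j s) / n c0 j0"]) simp
    next
      case False then have "j \<in> J'" using \<open>j \<in> J\<close> by (simp add: J'_def)
      then show ?thesis using S(3) by blast
    qed
  qed
qed


lemma ex2: "(x::2) = 1 \<or> x = 2" by (rule exhaust_2)

lemma S_nth: 
  "S0$i$j = (if i = 1 \<and> j = 1 then 1 else 0)"
  "S1$i$j = (if i = 1 \<and> j = 2 then 1 else 0)"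
  "S2$i$j = (if i = 2 \<and> j = 1 then 1 else 0)"
  "S3$i$j = (if i = 2 \<and> j = 2 then 1 else 0)"
  using ex2[of i] ex2[of j] by (auto simp: S0_def S1_def S2_def S3_def mat2_of_def)

lemma U8_eq: "U8 (i1,i2,i3) (j1,j2,j3) =
   (if j1 = 1 \<and> i2 = 1 then (if i1 = j3 \<and> j2 = i3 then 1 else 0)
    else if j1 = 2 \<and> i2 = 2 then (phi (\<chi> a b. if a = j3 \<and> b = i3 then 1 else 0))$i1$j2
    else 0)"
  using ex2[of i1] ex2[of i2] ex2[of i3] ex2[of j1] ex2[of j2] ex2[of j3]
  by (elim disjE) (simp_all add: U8_def tprod3_def S_nth phi_def)


lemma main_T: "\<exists>T. T \<noteq> 0 \<and> (\<forall>p q s t a b. valid H1 H2 K1 K2 G1 G2 p q s t a b \<longrightarrow> pr T (outer p s) = 0)"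
proof -
  obtain Y1 Y2 Y3 where Y: "\<forall>p q s t a b. valid H1 H2 K1 K2 G1 G2 p q s t a b \<longrightarrow> Span3 Y1 Y2 Y3 (outer p s)"
    using main_span by blast
  obtain T where T: "T \<noteq> 0" "pr T Y1 = 0" "pr T Y2 = 0" "pr T Y3 = 0" using perp3 by blast
  have "pr T X = 0" if sp: "Span3 Y1 Y2 Y3 X" for X
  proof -
    obtain c1 c2 c3 where "X = sm c1 Y1 + sm c2 Y2 + sm c3 Y3" using sp unfolding Span3_def by blast
    then have "pr T X = c1 * pr T Y1 + c2 * pr T Y2 + c3 * pr T Y3" by (simp add: pr_def algebra_simps)
    then show ?thesis using T by simp
  qed
  then show ?thesis using T(1) Y by blast
qed

lemma sub2_sum:
  fixes f :: "nat \<Rightarrow> 'k \<Rightarrow> complex"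
  assumes "S \<subseteq> {x, y}"
  shows "\<exists>al be. \<forall>k. (\<Sum>s\<in>S. a s * f s k) = al * f x k + be * f y k"
proof -
  have "S = {} \<or> S = {x} \<or> S = {y} \<or> S = {x, y}" using assms by blast
  then show ?thesis
  proof (elim disjE)
    assume "S = {}" then show ?thesis by (intro exI[of _ 0]) simp
  next
    assume "S = {x}" then show ?thesis by (intro exI[of _ "a x"] exI[of _ 0]) simp
  next
    assume "S = {y}" then show ?thesis by (intro exI[of _ 0] exI[of _ "a y"]) simp
  next
    assume S: "S = {x, y}"
    show ?thesis
    proof (cases "x = y")
      case True then show ?thesis using S by (intro exI[of _ "a x"] exI[of _ 0]) simp
    next
      case False then show ?thesis using S by (intro exI[of _ "a x"] exI[of _ "a y"]) simp
    qed
  qed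
qed

lemma card_le2: "finite S \<Longrightarrow> card S \<le> 2 \<Longrightarrow> \<exists>x y. S \<subseteq> {x, y}"
proof -
  assume f: "finite S" and c: "card S \<le> 2"
  then have "card S = 0 \<or> card S = 1 \<or> card S = 2" by arith
  then show ?thesis
  proof (elim disjE)
    assume "card S = 0" then have "S = {}" using f by simp
    then show ?thesis by auto
  next
    assume "card S = 1" then obtain x where "S = {x}" by (auto simp: card_1_singleton_iff)
    then show ?thesis by auto
  next
    assume "card S = 2" then obtain x y where "S = {x, y}" by (auto simp: card_2_iff)
    then show ?thesis by auto
  qed
qed

lemma pr_sum: "pr T (\<chi> i k. \<Sum>j\<in>J. f j * X j $ i $ k) = (\<Sum>j\<in>J. f j * pr T (X j))"
  by (simp add: pr_def sum_distrib_left sum.distrib algebra_simps)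


lemma P8: "U8 = (\<lambda>x y. \<Sum>j<8. tprod3 ([S0,S1,S2,S3,S0,S1,S2,S3] ! j) ([S0,S3,S0,S2,S1,S2,S1,S3] ! j) ([S0,S0,S1,S1,S2,S2,S3,S3] ! j) x y)"
  by (simp add: U8_def numeral_eq_Suc add.assoc)

lemma tprod3_0: "tprod3 0 B C x y = 0"
  by (cases x; cases y) (simp add: tprod3_def)


lemma no6:
  assumes eq: "\<forall>x y. U8 x y = (\<Sum>j<(6::nat). tprod3 (A j) (B j) (C j) x y)"
  shows False
proof -
  define p where "p j = (\<chi> i. A j $ i $ 1)" for j
  define q where "q j = (\<chi> i. A j $ i $ 2)" for j
  define s where "s j = (\<chi> k. B j $ 1 $ k)" for j
  define t where "t j = (\<chi> k. B j $ 2 $ k)" for j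
  define N :: "2 \<times> 2 \<Rightarrow> nat \<Rightarrow> complex" where "N c j = C j $ fst c $ snd c" for c j
  have E: "U8 (i1,i2,i3) (j1,j2,j3) = (\<Sum>j<6. N (i3,j3) j * (A j$i1$j1 * B j$i2$j2))" for i1 i2 i3 j1 j2 j3
    using eq by (simp add: tprod3_def N_def algebra_simps)
  have R1: "(\<Sum>j<6. N c j * (p j$i * t j$k)) = 0" for c i k
  proof -
    obtain i3 j3 where c: "c = (i3, j3)" by (cases c)
    show ?thesis using E[of i 2 i3 1 k j3] by (simp add: c U8_eq p_def t_def)
  qed
  have R2: "(\<Sum>j<6. N c j * (q j$i * s j$k)) = 0" for c i k
  proof -
    obtain i3 j3 where c: "c = (i3, j3)" by (cases c)
    show ?thesis using E[of i 1 i3 2 k j3] by (simp add: c U8_eq q_def s_def)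
  qed
  have R4: "(\<Sum>j<6. N c j * (p j$i * s j$k)) = (if i = snd c \<and> k = fst c then 1 else 0)" for c i k
  proof -
    obtain i3 j3 where c: "c = (i3, j3)" by (cases c)
    show ?thesis using E[of i 1 i3 1 k j3] by (simp add: c U8_eq p_def s_def)
  qed
  have R5: "(\<Sum>j<6. N c j * (q j$i * t j$k)) = phi (\<chi> a b. if a = snd c \<and> b = fst c then 1 else 0) $ i $ k" for c i k
  proof -
    obtain i3 j3 where c: "c = (i3, j3)" by (cases c)
    show ?thesis using E[of i 2 i3 2 k j3] by (simp add: c U8_eq q_def t_def)
  qed
  have R3: "(\<Sum>j<6. N c j * (q j$i * t j$k - phi (outer (p j) (s j)) $ i $ k)) = 0" for c i k
  proof -
    have "(\<Sum>j<6. N c j * (q j$i * t j$k - phi (outer (p j) (s j)) $ i $ k))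
      = (\<Sum>j<6. N c j * (q j$i * t j$k)) - (\<Sum>j<6. N c j * phi (outer (p j) (s j)) $ i $ k)"
      by (simp add: right_diff_distrib sum_subtractf)
    also have "(\<Sum>j<6. N c j * phi (outer (p j) (s j)) $ i $ k) = phi (\<chi> a b. if a = snd c \<and> b = fst c then 1 else 0) $ i $ k"
      using ex2[of i] ex2[of k] R4[of c 1 2] R4[of c 1 1] R4[of c 2 1] R4[of c 2 2]
      by (elim disjE) simp_all
    finally show ?thesis using R5 by simp
  qed
  define nu :: "nat \<Rightarrow> nat \<times> 2 \<times> 2 \<Rightarrow> complex" where
    "nu j kk = (case kk of (m, i, k) \<Rightarrow> if m = 0 then p j$i * t j$k else if m = 1 then q j$i * s j$k
        else q j$i * t j$k - phi (outer (p j) (s j)) $ i $ k)" for j kk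
  have rel: "\<forall>c\<in>UNIV. \<forall>kk. (\<Sum>j\<in>{..<6}. N c j * nu j kk) = 0"
  proof (intro ballI allI)
    fix c :: "2 \<times> 2" and kk :: "nat \<times> 2 \<times> 2"
    obtain m i k where kk: "kk = (m, i, k)" by (cases kk) auto
    show "(\<Sum>j\<in>{..<6}. N c j * nu j kk) = 0"
    proof (cases "m = 0")
      case True
      then have "nu j kk = p j$i * t j$k" for j by (simp add: kk nu_def)
      then show ?thesis using R1[of c i k] by simp
    next
      case m0: False
      show ?thesis
      proof (cases "m = 1")
        case True
        then have "nu j kk = q j$i * s j$k" for j by (simp add: kk nu_def)
        then show ?thesis using R2[of c i k] by simp
      next
        case False
        then have "nu j kk = q j$i * t j$k - phi (outer (p j) (s j)) $ i $ k" for j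
          using m0 by (simp add: kk nu_def)
        then show ?thesis using R3[of c i k] by simp
      qed
    qed
  qed
  have ind: "\<forall>g. (\<forall>j\<in>{..<6}. (\<Sum>c\<in>UNIV. g c * N c j) = 0) \<longrightarrow> (\<forall>c\<in>UNIV. g c = 0)"
  proof (intro allI impI ballI)
    fix g :: "2 \<times> 2 \<Rightarrow> complex" and c0 :: "2 \<times> 2"
    assume h: "\<forall>j\<in>{..<6}. (\<Sum>c\<in>UNIV. g c * N c j) = 0"
    have "g c0 = (\<Sum>c\<in>UNIV. g c * (if c = c0 then 1 else 0))"
      by (simp add: if_distrib cong: if_cong)
    also have "\<dots> = (\<Sum>c\<in>UNIV. g c * (\<Sum>j<6. N c j * (p j$snd c0 * s j$fst c0)))"
      by (intro sum.cong refl) (auto simp: R4 prod_eq_iff)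
    also have "\<dots> = (\<Sum>j<6. (\<Sum>c\<in>UNIV. g c * N c j) * (p j$snd c0 * s j$fst c0))"
      by (simp add: sum_distrib_left sum_distrib_right mult.assoc) (rule sum.swap)
    also have "\<dots> = 0" using h by simp
    finally show "g c0 = 0" .
  qed
  have cU: "card (UNIV :: (2 \<times> 2) set) = 4" by (simp add: card_UNIV_length_enum)
  obtain S where S: "S \<subseteq> {..<6}" "card S + card (UNIV :: (2 \<times> 2) set) \<le> card {..<(6::nat)}"
     "\<forall>j\<in>{..<6}. \<exists>a. \<forall>kk. nu j kk = (\<Sum>s\<in>S. a s * nu s kk)"
  proof -
    have "\<exists>S\<subseteq>{..<6::nat}. card S + card (UNIV :: (2 \<times> 2) set) \<le> card {..<(6::nat)} \<and>
       (\<forall>j\<in>{..<6}. \<exists>a. \<forall>kk. nu j kk = (\<Sum>s\<in>S. a s * nu s kk))"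
      by (rule elim_lemma[OF finite finite_lessThan rel ind])
    then show ?thesis using that by blast
  qed
  have "finite S" using S(1) finite_subset by blast
  moreover have "card S \<le> 2" using S(2) cU by simp
  ultimately obtain x y where xy: "S \<subseteq> {x, y}" using card_le2 by blast
  have rep: "\<exists>al be. \<forall>kk. nu j kk = al * nu x kk + be * nu y kk" if "j < 6" for j
  proof -
    have jj: "j \<in> {..<6}" using that by simp
    obtain a where a: "\<forall>kk. nu j kk = (\<Sum>s\<in>S. a s * nu s kk)" using S(3) jj by blast
    obtain al be where ab: "\<forall>kk. (\<Sum>s\<in>S. a s * nu s kk) = al * nu x kk + be * nu y kk"
      using sub2_sum[OF xy, of a nu] by blast
    have "\<forall>kk. nu j kk = al * nu x kk + be * nu y kk"
    proof
      fix kk show "nu j kk = al * nu x kk + be * nu y kk" using a ab by metis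
    qed
    then show ?thesis by blast
  qed
  define H1 :: mat2 where "H1 = (\<chi> i k. nu x (0, i, k))"
  define H2 :: mat2 where "H2 = (\<chi> i k. nu y (0, i, k))"
  define K1 :: mat2 where "K1 = (\<chi> i k. nu x (1, i, k))"
  define K2 :: mat2 where "K2 = (\<chi> i k. nu y (1, i, k))"
  define G1 :: mat2 where "G1 = (\<chi> i k. nu x (2, i, k))"
  define G2 :: mat2 where "G2 = (\<chi> i k. nu y (2, i, k))"
  obtain T where T: "T \<noteq> 0" "\<forall>p q s t a b. valid H1 H2 K1 K2 G1 G2 p q s t a b \<longrightarrow> pr T (outer p s) = 0"
    using main_T by blast
  have Z: "pr T (outer (p j) (s j)) = 0" if j: "j < 6" for j
  proof -
    obtain al be where r: "\<forall>kk. nu j kk = al * nu x kk + be * nu y kk" using rep[OF j] by blast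
    have v: "valid H1 H2 K1 K2 G1 G2 (p j) (q j) (s j) (t j) al be"
    proof -
      have "outer (p j) (t j) $ i $ k = lin al be H1 H2 $ i $ k" for i k
        using r[rule_format, of "(0, i, k)"] by (simp add: nu_def H1_def H2_def)
      moreover have "outer (q j) (s j) $ i $ k = lin al be K1 K2 $ i $ k" for i k
        using r[rule_format, of "(1, i, k)"] by (simp add: nu_def K1_def K2_def)
      moreover have "outer (q j) (t j) $ i $ k = (phi (outer (p j) (s j)) + lin al be G1 G2) $ i $ k" for i k
        using r[rule_format, of "(2, i, k)"] by (simp add: nu_def G1_def G2_def algebra_simps)
      ultimately show ?thesis unfolding valid_def by (simp add: vec_eq_iff)
    qed
    then show ?thesis using T(2) by blast
  qed
  have "T $ a $ b = 0" for a b
  proof -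
    have "pr T (\<chi> i k. \<Sum>j\<in>{..<6}. N (b, a) j * outer (p j) (s j) $ i $ k) = 0"
      by (simp only: pr_sum) (simp add: Z)
    moreover have "(\<chi> i k. \<Sum>j\<in>{..<6}. N (b, a) j * outer (p j) (s j) $ i $ k) = (\<chi> i k. if i = a \<and> k = b then 1 else 0)"
      using R4[of "(b, a)"] by (simp add: vec_eq_iff)
    moreover have "pr T (\<chi> i k. if i = a \<and> k = b then 1 else 0) = T $ a $ b"
      using ex2[of a] ex2[of b] by (elim disjE) (simp_all add: pr_def)
    ultimately show ?thesis by simp
  qed
  then have "T = 0" by (simp add: vec_eq_iff)
  with T(1) show False by simp
qed


lemma no_le6:
  fixes r :: nat and A B C :: "nat \<Rightarrow> mat2"
  assumes r: "r \<le> 6" and eq: "U8 = (\<lambda>x y. \<Sum>j<r. tprod3 (A j) (B j) (C j) x y)"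
  shows False
proof -
  define A' :: "nat \<Rightarrow> mat2" where "A' j = (if j < r then A j else 0)" for j
  have "\<forall>x y. U8 x y = (\<Sum>j<(6::nat). tprod3 (A' j) (B j) (C j) x y)"
  proof (intro allI)
    fix x y
    have "(\<Sum>j<(6::nat). tprod3 (A' j) (B j) (C j) x y) = (\<Sum>j<r. tprod3 (A j) (B j) (C j) x y)"
      by (rule sum.mono_neutral_cong_right) (use r in \<open>auto simp: A'_def tprod3_0\<close>)
    moreover have "U8 x y = (\<Sum>j<r. tprod3 (A j) (B j) (C j) x y)"
      using fun_cong[OF fun_cong[OF eq], of x y] by simp
    ultimately show "U8 x y = (\<Sum>j<(6::nat). tprod3 (A' j) (B j) (C j) x y)" by simp
  qed
  then show False by (rule no6)
qed

theorem theorem5: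
  shows "schmidt_rank U8 \<in> {7, 8}"
proof -
  define P where "P r \<longleftrightarrow> (\<exists>A B C :: nat \<Rightarrow> mat2. U8 = (\<lambda>x y. \<Sum>j<r. tprod3 (A j) (B j) (C j) x y))" for r
  have sr: "schmidt_rank U8 = (LEAST r. P r)" by (simp add: schmidt_rank_def P_def)
  have P8: "P 8" unfolding P_def using P8 by blast
  have le: "(LEAST r. P r) \<le> 8" using Least_le[of P, OF P8] .
  have "P (LEAST r. P r)" using LeastI[of P, OF P8] .
  then have "\<not> (LEAST r. P r) \<le> 6" unfolding P_def using no_le6 by blast
  with le have "(LEAST r. P r) = 7 \<or> (LEAST r. P r) = 8" by linarith
  then show ?thesis by (simp add: sr)
qed


end
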